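(* Let $\theta:(0,\infty)\to\mathbb{R}$ satisfy $0<\theta(x)\le 2\arctan(x/2)$ for all $x>0$. Then for all $\Lambda\ge 0$, $m>0$ and $\Delta t>0$ satisfying $\Delta t^2\Lambda/m<4$, we have $$\left|\cos(\theta(x))-\frac{\Delta t^2(\Lambda/m)}{2}\,\frac{\sin(\theta(x))}{x}\right|<1\quad\text{for all }x>0.$$ *)

theory Defs
  imports Complex_Main
begin

end

theory Submission
  imports Defs
begin

theorem corollary1:
  fixes \<theta> :: "real \<Rightarrow> real" and \<Lambda> m \<Delta>t :: real
  assumes theta_bounds: "\<And>x. x > 0 \<Longrightarrow> 0 < \<theta> x \<and> \<theta> x \<le> 2 * arctan (x / 2)"
    and "\<Lambda> \<ge> 0" and "m > 0" and "\<Delta>t > 0"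
    and "\<Delta>t ^ 2 * \<Lambda> / m < 4"
  shows "\<forall>x > 0. \<bar>cos (\<theta> x) - (\<Delta>t ^ 2 * (\<Lambda> / m) / 2) * (sin (\<theta> x) / x)\<bar> < 1"
proof (intro allI impI)
  fix x :: real assume x: "x > 0"
  define c where "c = \<Delta>t ^ 2 * (\<Lambda> / m) / 2"
  have c0: "c \<ge> 0" using assms unfolding c_def by simp
  have c2: "c < 2"
  proof -
    define a where "a = \<Delta>t ^ 2 * (\<Lambda> / m)"
    have "a < 4" using assms(5) unfolding a_def by (simp add: times_divide_eq_right)
    hence "a / 2 < 2" by linarith
    thus ?thesis unfolding c_def a_def .
  qed
  define s where "s = \<theta> x / 2"
  have t: "\<theta> x = 2 * s" unfolding s_def by simp
  have s0: "0 < s" and sa: "s \<le> arctan (x/2)" using theta_bounds[OF x] unfolding s_def by auto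
  have sp: "s < pi/2" using sa arctan_ubound[of "x/2"] by linarith
  have tan_le: "tan s \<le> x/2"
  proof (rule ccontr)
    assume "\<not> tan s \<le> x/2"
    hence "tan (arctan (x/2)) < tan s" by (simp only: arctan)
    hence "arctan (x/2) < s"
      using tan_monotone'[of "arctan (x/2)" s] sp s0 arctan_lbound[of "x/2"] arctan_ubound[of "x/2"]
      by linarith
    thus False using sa by simp
  qed
  have cs: "cos s > 0" using s0 sp by (intro cos_gt_zero_pi) auto
  have ss: "sin s > 0" using s0 sp by (intro sin_gt_zero) auto
  have sin_eq: "sin s = tan s * cos s" using cs by (simp add: tan_def)
  have ct: "cos (\<theta> x) = 2 * (cos s)^2 - 1" unfolding t by (simp add: cos_double_cos)
  have st: "sin (\<theta> x) = 2 * sin s * cos s" unfolding t by (simp add: sin_double)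
  have st0: "sin (\<theta> x) > 0" using st ss cs by simp
  have "\<theta> x < pi" using t sp by simp
  have ct1: "cos (\<theta> x) < 1"
  proof -
    have "cos (\<theta> x) < cos 0"
      using \<open>\<theta> x < pi\<close> theta_bounds[OF x] by (intro cos_monotone_0_pi) auto
    thus ?thesis by simp
  qed
  have up: "cos (\<theta> x) - c * (sin (\<theta> x) / x) < 1"
    using ct1 c0 st0 x by (smt (verit) divide_pos_pos mult_nonneg_nonneg)
  have key: "c * sin s / x < cos s"
  proof -
    have "c * sin s / x = c * tan s * cos s / x" using sin_eq by simp
    also have "\<dots> \<le> c * (x/2) * cos s / x"
      using c0 tan_le cs x by (intro divide_right_mono mult_right_mono mult_left_mono) auto
    also have "\<dots> = (c/2) * cos s" using x by simp
    also have "\<dots> < cos s" using c2 cs by simp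
    finally show ?thesis .
  qed
  have "c * (sin (\<theta> x) / x) = 2 * cos s * (c * sin s / x)" unfolding st by simp
  also have "\<dots> < 2 * cos s * cos s" using key cs by (intro mult_strict_left_mono) auto
  finally have lo: "cos (\<theta> x) - c * (sin (\<theta> x) / x) > -1" unfolding ct by (simp add: power2_eq_square)
  show "\<bar>cos (\<theta> x) - c * (sin (\<theta> x) / x)\<bar> < 1" using up lo by simp
qed

end
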